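(* Let $a_i<b_i$ ($i=1,\dots,n$) be real numbers and let $u:\prod_{i=1}^n[a_i,b_i]\to[0,\infty]$ be a convex function. Then for every $x=(x_1,\dots,x_n)$ in the open box $\prod_{i=1}^n(a_i,b_i)$, \[ u(x)\le \int_{\prod_{i=1}^n[a_i,b_i]}u\,d\mathbf{x}\cdot\frac{1}{\prod_{i=1}^n\min\{x_i-a_i,\;b_i-x_i\}}, \] where $d\mathbf{x}$ denotes the $n$-dimensional Lebesgue measure. (At boundary points of the box the right-hand side is $+\infty$ and the inequality is trivial.)
   Context: A convex function with values in $[0,\infty]$ means $u((1-t)x+ty)\le(1-t)u(x)+tu(y)$ for all $x,y$ and $t\in[0,1]$, with the usual conventions for $+\infty$. *)

theory Defs
  imports "HOL-Analysis.Analysis"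
begin

text \<open>Convexity of a function with values in [0,\<infinity>] (ennreal) on a set S,
  with the usual ennreal conventions for \<infinity> (in particular 0 * \<infinity> = 0).\<close>
definition convex_on_ennreal :: "'a::real_vector set \<Rightarrow> ('a \<Rightarrow> ennreal) \<Rightarrow> bool" where
  "convex_on_ennreal S u \<longleftrightarrow>
     (\<forall>x\<in>S. \<forall>y\<in>S. \<forall>t::real. 0 \<le> t \<and> t \<le> 1 \<longrightarrow>
        u ((1 - t) *\<^sub>R x + t *\<^sub>R y) \<le> ennreal (1 - t) * u x + ennreal t * u y)"

end

theory Submission
  imports Defs
begin

lemma emeas_cbox: "emeasure lebesgue (cbox (a::real^'n) b) = ennreal (measure lborel (cbox a b))"
proof -
  have "emeasure lebesgue (cbox (a::real^'n) b) = emeasure lborel (cbox a b)" by simp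
  also have "\<dots> = ennreal (measure lborel (cbox a b))"
    by (rule emeasure_eq_ennreal_measure) (use emeasure_lborel_cbox_finite in \<open>auto simp: less_top\<close>)
  finally show ?thesis .
qed

lemma cvx_comb:
  assumes "0 \<le> t" "t \<le> 1" "0 \<le> c"
  shows "ennreal (1 - t) * ennreal c + ennreal t * ennreal c = ennreal c"
proof -
  have "ennreal (1 - t) * ennreal c + ennreal t * ennreal c = ennreal ((1-t)*c + t*c)"
    using assms by (simp add: ennreal_plus ennreal_mult)
  also have "\<dots> = ennreal c" by (simp add: algebra_simps)
  finally show ?thesis .
qed

theorem mainTheorem1:
  fixes a b x :: "real ^ 'n" and u :: "real ^ 'n \<Rightarrow> ennreal"
  assumes ab: "\<forall>i. a $ i < b $ i"
    and cv: "convex_on_ennreal (cbox a b) u"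
    and xin: "x \<in> box a b"
  shows "u x \<le> (\<integral>\<^sup>+ y \<in> cbox a b. u y \<partial>lebesgue)
                  * (1 / ennreal (\<Prod>i\<in>UNIV. min (x $ i - a $ i) (b $ i - x $ i)))"
proof -
  define d where "d i = min (x $ i - a $ i) (b $ i - x $ i)" for i
  define P where "P = (\<Prod>i\<in>UNIV. d i)"
  define I where "I = (\<integral>\<^sup>+ y \<in> cbox a b. u y \<partial>lebesgue)"
  have dpos: "d i > 0" for i using xin by (auto simp: d_def mem_box_cart)
  have Ppos: "P > 0" unfolding P_def using dpos by (simp add: prod_pos)
  define lo where "lo = x - (\<chi> i. d i)"
  define hi where "hi = x + (\<chi> i. d i)"
  define Q where "Q = cbox lo hi"
  have QI: "y \<in> Q \<longleftrightarrow> (\<forall>i. x$i - d i \<le> y$i \<and> y$i \<le> x$i + d i)" for y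
    by (auto simp: Q_def lo_def hi_def mem_box_cart)
  have Qsub: "Q \<subseteq> cbox a b"
  proof
    fix y assume "y \<in> Q"
    then show "y \<in> cbox a b" unfolding QI mem_box_cart d_def
      by (smt (verit))
  qed
  define R where "R = (\<lambda>y::real^'n. (-1) *\<^sub>R y + 2 *\<^sub>R x)"
  have RR: "R (R y) = y" for y by (simp add: R_def algebra_simps)
  have RQ: "R y \<in> Q" if yQ: "y \<in> Q" for y
    unfolding QI
  proof
    fix i
    have "x$i - d i \<le> y$i \<and> y$i \<le> x$i + d i" using yQ QI by blast
    then show "x $ i - d i \<le> R y $ i \<and> R y $ i \<le> x $ i + d i" by (simp add: R_def)
  qed
  have Rimg: "R ` S = {y. R y \<in> S}" for S
  proof
    show "R ` S \<subseteq> {y. R y \<in> S}" by (auto simp: RR)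
    show "{y. R y \<in> S} \<subseteq> R ` S"
    proof
      fix y assume "y \<in> {y. R y \<in> S}"
      then show "y \<in> R ` S" using RR[of y] by (metis image_eqI mem_Collect_eq)
    qed
  qed
  have mid: "(1 - 1/2) *\<^sub>R y + (1/2) *\<^sub>R R y = x" for y
    by (simp add: R_def algebra_simps)
  have measQ: "emeasure lebesgue Q \<ge> ennreal (2 * P)"
  proof -
    have ne: "cbox lo hi \<noteq> {}" using QI[of x] dpos unfolding Q_def
      by (metis empty_iff less_eq_real_def diff_le_eq le_add_same_cancel1)
    have "measure lborel Q = (\<Prod>i\<in>UNIV. hi$i - lo$i)"
      unfolding Q_def using content_cbox_cart[OF ne] by simp
    also have "\<dots> = (\<Prod>i\<in>UNIV. 2 * d i)" by (simp add: hi_def lo_def)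
    also have "\<dots> = 2 ^ CARD('n) * P" by (simp add: prod.distrib P_def)
    finally have e: "measure lborel Q = 2 ^ CARD('n) * P" .
    have "(2::real) \<le> 2 ^ CARD('n)"
    proof -
      have "1 \<le> CARD('n)" by (simp add: Suc_leI)
      then have "(2::real) ^ 1 \<le> 2 ^ CARD('n)" by (rule power_increasing) simp
      then show ?thesis by simp
    qed
    then have "2 * P \<le> measure lborel Q" using e Ppos by simp
    then show ?thesis unfolding Q_def emeas_cbox by (simp add: ennreal_leI)
  qed
  have Qm: "Q \<in> sets lebesgue" unfolding Q_def by simp
  have "u x \<le> I * ennreal (1 / P)"
  proof (rule dense_le)
    fix y assume ylt: "y < u x"
    then obtain c where c: "y = ennreal c" "c \<ge> 0"
      by (cases y) (auto simp: top_unique)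
    define C where "C = {z \<in> Q. u z \<le> ennreal c}"
    define A where "A = Q - C"
    have convC: "convex C"
      unfolding convex_alt
    proof (intro ballI allI impI)
      fix z1 z2 and t :: real assume z: "z1 \<in> C" "z2 \<in> C" and t: "0 \<le> t \<and> t \<le> 1"
      have "(1 - t) *\<^sub>R z1 + t *\<^sub>R z2 \<in> Q"
        using z t convex_box(1)[of lo hi] unfolding C_def Q_def convex_alt by auto
      moreover have "u ((1 - t) *\<^sub>R z1 + t *\<^sub>R z2) \<le> ennreal c"
      proof -
        have "u ((1 - t) *\<^sub>R z1 + t *\<^sub>R z2) \<le> ennreal (1 - t) * u z1 + ennreal t * u z2"
          using cv z t Qsub unfolding convex_on_ennreal_def C_def by auto
        also have "\<dots> \<le> ennreal (1 - t) * ennreal c + ennreal t * ennreal c"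
          using z unfolding C_def by (intro add_mono mult_left_mono) auto
        also have "\<dots> = ennreal ((1-t)*c + t*c)" using t c by (simp add: ennreal_plus ennreal_mult)
        also have "\<dots> = ennreal c" by (simp add: algebra_simps)
        finally show ?thesis .
      qed
      ultimately show "(1 - t) *\<^sub>R z1 + t *\<^sub>R z2 \<in> C" unfolding C_def by auto
    qed
    have CQ: "C \<subseteq> Q" unfolding C_def by auto
    have Cm: "C \<in> sets lebesgue"
      using measurable_convex[OF convC] bounded_subset[OF bounded_cbox CQ[unfolded Q_def]]
      by (auto simp: fmeasurable_def)
    have RCQ: "R ` C \<subseteq> Q" using CQ RQ by auto
    have convRC: "convex (R ` C)"
    proof -
      have "R = (\<lambda>y. 2 *\<^sub>R x + (-1) *\<^sub>R y)" by (auto simp: R_def fun_eq_iff add.commute)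
      then show ?thesis using convex_affinity[OF convC, of "2 *\<^sub>R x" "-1"] by simp
    qed
    have RCm: "R ` C \<in> sets lebesgue"
      using measurable_convex[OF convRC] bounded_subset[OF bounded_cbox RCQ[unfolded Q_def]]
      by (auto simp: fmeasurable_def)
    have RA: "R ` A = Q - R ` C"
      unfolding Rimg A_def using RQ RR by auto (metis RR)
    have Am: "A \<in> sets lebesgue" unfolding A_def using Qm Cm by auto
    have RAm: "R ` A \<in> sets lebesgue" unfolding RA using Qm RCm by auto
    have eRA: "emeasure lebesgue (R ` A) = emeasure lebesgue A"
      using emeasure_lebesgue_affine[of "-1" "2 *\<^sub>R x" A] unfolding R_def by simp
    have cx: "ennreal c < u x" using ylt c by simp
    have cover: "Q \<subseteq> A \<union> R ` A"
    proof
      fix z assume zQ: "z \<in> Q"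
      show "z \<in> A \<union> R ` A"
      proof (rule ccontr)
        assume "z \<notin> A \<union> R ` A"
        then have z1: "z \<in> C" and z2: "R z \<in> C" using zQ RQ[OF zQ] unfolding A_def Rimg by auto
        have "u x \<le> ennreal (1 - 1/2) * u z + ennreal (1/2) * u (R z)"
        proof -
          have "z \<in> cbox a b" "R z \<in> cbox a b" using z1 z2 Qsub CQ by auto
          then have "u ((1 - 1/2) *\<^sub>R z + (1/2) *\<^sub>R R z) \<le> ennreal (1 - 1/2) * u z + ennreal (1/2) * u (R z)"
            using cv unfolding convex_on_ennreal_def by (intro cv[unfolded convex_on_ennreal_def, rule_format]) auto
          then show ?thesis unfolding mid .
        qed
        also have "\<dots> \<le> ennreal (1 - 1/2) * ennreal c + ennreal (1/2) * ennreal c"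
          using z1 z2 unfolding C_def by (intro add_mono mult_left_mono) auto
        also have "\<dots> = ennreal c" by (rule cvx_comb) (use c in auto)
        finally show False using cx by simp
      qed
    qed
    have "ennreal (2 * P) \<le> emeasure lebesgue (A \<union> R ` A)"
      using measQ emeasure_mono[OF cover] Am RAm by (meson order_trans sets.Un)
    also have "\<dots> \<le> emeasure lebesgue A + emeasure lebesgue (R ` A)"
      by (rule emeasure_subadditive[OF Am RAm])
    also have "\<dots> = 2 * emeasure lebesgue A" using eRA by (simp add: mult_2)
    finally have "2 * ennreal P \<le> 2 * emeasure lebesgue A"
      using Ppos by (simp add: ennreal_mult)
    then have PA: "ennreal P \<le> emeasure lebesgue A"
      by (subst (asm) ennreal_mult_le_mult_iff) auto
    have "ennreal c * emeasure lebesgue A = (\<integral>\<^sup>+ z \<in> A. ennreal c \<partial>lebesgue)"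
      by (rule nn_integral_cmult_indicator[OF Am, symmetric])
    also have "\<dots> \<le> I" unfolding I_def
    proof (rule nn_integral_mono)
      fix z show "ennreal c * indicator A z \<le> u z * indicator (cbox a b) z"
      proof (cases "z \<in> A")
        case True
        then have "z \<in> cbox a b" "ennreal c \<le> u z" using Qsub unfolding A_def C_def by auto
        then show ?thesis using True by simp
      qed simp
    qed
    finally have cP: "ennreal c * ennreal P \<le> I"
      using PA by (meson mult_left_mono order_trans zero_le)
    have "y = ennreal c * ennreal P * ennreal (1 / P)"
      using Ppos c by (simp add: ennreal_mult'[symmetric])
    also have "\<dots> \<le> I * ennreal (1 / P)" using cP by (rule mult_right_mono) simp
    finally show "y \<le> I * ennreal (1 / P)" .
  qed
  moreover have "1 / ennreal P = ennreal (1 / P)"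
    using Ppos by (metis divide_ennreal ennreal_1 zero_le_one)
  ultimately show ?thesis unfolding I_def P_def d_def by simp
qed
end
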